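(* Let $n \geq 1$ and let $f:\{1,\ldots,n\}\to\{1,\ldots,n\}$ be any (total) function. Then there exists a well-formed compact-notation word $w$ over the points $\{1,\ldots,n\}$ (as defined in the context) such that $\mathcal{I}(w)=f$, i.e.\ every transformation of $\{1,\ldots,n\}$ can be written in the compact notation.
   Context: Compact notation. Fix $n\ge 1$. Words are over the terminal symbols \texttt{[}, \texttt{]}, \texttt{(}, \texttt{)}, \texttt{,}, \texttt{|} and symbols for the points $1,\ldots,n$. They are generated by the context-free grammar with start symbol $S$ and nonterminals $C$ (components), $N$ (nontrivial trees), $T$ (trees), $P$ (points): $S \to C^+ \mid \texttt{()}$; $C \to \texttt{(}\,T_1\texttt{,}T_2\texttt{,}\ldots\texttt{,}T_k\,\texttt{)}$ with $k\ge 2$, or $C\to N$; $N \to \texttt{[}\,T_1\texttt{,}\ldots\texttt{,}T_k\,\texttt{|}\,P\,\texttt{]}$ with $k\ge 2$ (a ``splat''), or $N \to \texttt{[}\,T_1\texttt{,}\ldots\texttt{,}T_k\,\texttt{]}$ with $k\ge 2$ (a ``conveyor belt''); $T \to N \mid P$; $P \to 1\mid 2\mid\cdots\mid n$. A word is well-formed if it is generated by this grammar and each point $1,\ldots,n$ occurs in it at most once. Semantics. Maps are represented as sets of pairs $(p,q)$ meaning $p\mapsto q$. The root of a tree is defined by $r(p)=p$ for a point $p$, $r(\texttt{[}T_1\texttt{,}\ldots\texttt{,}T_k\texttt{|}p\texttt{]})=p$, and $r(\texttt{[}T_1\texttt{,}\ldots\texttt{,}T_k\texttt{]})=r(T_k)$.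 Interpretation $\mathcal{I}$: for a point, $\mathcal{I}(P)=\varnothing$; for a splat, $\mathcal{I}(\texttt{[}T_1\texttt{,}\ldots\texttt{,}T_k\texttt{|}p\texttt{]})=\bigcup_{i=1}^k\mathcal{I}(T_i)\cup\{(r(T_i),p):1\le i\le k\}$; for a conveyor belt, $\mathcal{I}(\texttt{[}T_1\texttt{,}\ldots\texttt{,}T_k\texttt{]})=\bigcup_{i=1}^k\mathcal{I}(T_i)\cup\{(r(T_i),r(T_{i+1})):1\le i<k\}$; for a cycle component, $\mathcal{I}(\texttt{(}T_1\texttt{,}\ldots\texttt{,}T_k\texttt{)})=\bigcup_{i=1}^k\mathcal{I}(T_i)\cup\{(r(T_i),r(T_{i+1})):1\le i<k\}\cup\{(r(T_k),r(T_1))\}$; a component $C\to N$ has $\mathcal{I}(C)=\mathcal{I}(N)$. For the whole word: $\mathcal{I}(\texttt{()})$ is the identity map of $\{1,\ldots,n\}$, and if $w = C_1\cdots C_k$ then $\mathcal{I}(w)=\bigcup_{i=1}^k\mathcal{I}(C_i)\cup\{(p,p): p\in\{1,\ldots,n\}\text{ has no image in any }\mathcal{I}(C_i)\}$. For a well-formed word this set of pairs is the graph of a total function $\{1,\ldots,n\}\to\{1,\ldots,n\}$, which is identified with $\mathcal{I}(w)$. *)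

theory Defs
  imports Main
begin

datatype symbol = LBrack | RBrack | LPar | RPar | Comma | Bar | PtSym nat

type_synonym word = "symbol list"

datatype tree = Point nat | Splat "tree list" nat | Belt "tree list"

datatype comp = Cycle "tree list" | NTree tree

datatype sword = IdWord | Comps "comp list"

fun commasep :: "word list \<Rightarrow> word" where
  "commasep [] = []"
| "commasep [w] = w"
| "commasep (w # v # ws) = w @ [Comma] @ commasep (v # ws)"

fun yield_tree :: "tree \<Rightarrow> word" where
  "yield_tree (Point p) = [PtSym p]"
| "yield_tree (Splat ts p) = [LBrack] @ commasep (map yield_tree ts) @ [Bar, PtSym p, RBrack]"
| "yield_tree (Belt ts) = [LBrack] @ commasep (map yield_tree ts) @ [RBrack]"

fun yield_comp :: "comp \<Rightarrow> word" where
  "yield_comp (Cycle ts) = [LPar] @ commasep (map yield_tree ts) @ [RPar]"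
| "yield_comp (NTree t) = yield_tree t"

fun yield_sword :: "sword \<Rightarrow> word" where
  "yield_sword IdWord = [LPar, RPar]"
| "yield_sword (Comps cs) = concat (map yield_comp cs)"

fun valid_tree :: "nat \<Rightarrow> tree \<Rightarrow> bool" where
  "valid_tree n (Point p) = (1 \<le> p \<and> p \<le> n)"
| "valid_tree n (Splat ts p) = (2 \<le> length ts \<and> (\<forall>t\<in>set ts. valid_tree n t) \<and> 1 \<le> p \<and> p \<le> n)"
| "valid_tree n (Belt ts) = (2 \<le> length ts \<and> (\<forall>t\<in>set ts. valid_tree n t))"

fun is_point :: "tree \<Rightarrow> bool" where
  "is_point (Point _) = True"
| "is_point _ = False"

fun valid_comp :: "nat \<Rightarrow> comp \<Rightarrow> bool" where
  "valid_comp n (Cycle ts) = (2 \<le> length ts \<and> (\<forall>t\<in>set ts. valid_tree n t))"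
| "valid_comp n (NTree t) = (\<not> is_point t \<and> valid_tree n t)"

fun valid_sword :: "nat \<Rightarrow> sword \<Rightarrow> bool" where
  "valid_sword n IdWord = True"
| "valid_sword n (Comps cs) = (cs \<noteq> [] \<and> (\<forall>c\<in>set cs. valid_comp n c))"

definition generated :: "nat \<Rightarrow> word \<Rightarrow> bool" where
  "generated n w \<longleftrightarrow> (\<exists>s. valid_sword n s \<and> yield_sword s = w)"

definition points_of_word :: "word \<Rightarrow> nat list" where
  "points_of_word w = [p. PtSym p \<leftarrow> w]"

definition well_formed :: "nat \<Rightarrow> word \<Rightarrow> bool" where
  "well_formed n w \<longleftrightarrow> generated n w \<and> distinct (points_of_word w)"

function root :: "tree \<Rightarrow> nat" where
  "root (Point p) = p"
| "root (Splat ts p) = p"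
| "root (Belt ts) = (if ts = [] then 0 else root (last ts))"
  by pat_completeness auto
termination
  by (relation "measure size") (auto simp: less_Suc_eq_le intro: size_list_estimation' last_in_set)

fun interp_tree :: "tree \<Rightarrow> (nat \<times> nat) set" where
  "interp_tree (Point p) = {}"
| "interp_tree (Splat ts p) =
     (\<Union>t\<in>set ts. interp_tree t) \<union> {(root t, p) | t. t \<in> set ts}"
| "interp_tree (Belt ts) =
     (\<Union>t\<in>set ts. interp_tree t) \<union> {(root (ts ! i), root (ts ! (i+1))) | i. i + 1 < length ts}"

fun interp_comp :: "comp \<Rightarrow> (nat \<times> nat) set" where
  "interp_comp (Cycle ts) =
     (\<Union>t\<in>set ts. interp_tree t) \<union> {(root (ts ! i), root (ts ! (i+1))) | i. i + 1 < length ts}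
     \<union> {(root (last ts), root (hd ts))}"
| "interp_comp (NTree t) = interp_tree t"

fun interp_sword :: "nat \<Rightarrow> sword \<Rightarrow> (nat \<times> nat) set" where
  "interp_sword n IdWord = {(p, p) | p. p \<in> {1..n}}"
| "interp_sword n (Comps cs) =
     (\<Union>c\<in>set cs. interp_comp c) \<union>
     {(p, p) | p. p \<in> {1..n} \<and> p \<notin> Domain (\<Union>c\<in>set cs. interp_comp c)}"

definition graph_on :: "nat \<Rightarrow> (nat \<Rightarrow> nat) \<Rightarrow> (nat \<times> nat) set" where
  "graph_on n f = {(p, f p) | p. p \<in> {1..n}}"

end

theory Submission
  imports Defs
begin

lemma commasep_cons: "commasep (w # ws) = w @ (if ws = [] then [] else Comma # commasep ws)"
  by (cases ws) auto

lemma yield_tree_ne: "yield_tree t \<noteq> []"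
  by (cases t) auto


lemma commasep_inj:
  assumes IH: "\<forall>t\<in>set ts. \<forall>t' r r'. valid_tree n t \<longrightarrow> valid_tree n t' \<longrightarrow>
                 yield_tree t @ r = yield_tree t' @ r' \<longrightarrow> t = t' \<and> r = r'"
    and "\<forall>t\<in>set ts. valid_tree n t" "\<forall>t\<in>set ts'. valid_tree n t" "ts \<noteq> []" "ts' \<noteq> []"
    and "commasep (map yield_tree ts) @ r = commasep (map yield_tree ts') @ r'"
    and "\<not> (\<exists>x. r = Comma # x)" "\<not> (\<exists>x. r' = Comma # x)"
  shows "ts = ts' \<and> r = r'"
  using assms
proof (induction ts arbitrary: ts')
  case Nil then show ?case by simp
next
  case (Cons t ts)
  obtain t' ts'' where ts': "ts' = t' # ts''" using Cons.prems(5) by (cases ts') auto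
  define X where "X = (if ts = [] then [] else Comma # commasep (map yield_tree ts)) @ r"
  define Y where "Y = (if ts'' = [] then [] else Comma # commasep (map yield_tree ts'')) @ r'"
  have eq: "yield_tree t @ X = yield_tree t' @ Y"
    using Cons.prems(6) ts' unfolding X_def Y_def by (simp add: commasep_cons)
  have vt: "valid_tree n t" using Cons.prems(2) by simp
  have vt': "valid_tree n t'" using Cons.prems(3) ts' by simp
  have "t = t' \<and> X = Y"
    using Cons.prems(1)[rule_format, of t t' X Y] vt vt' eq by (meson list.set_intros(1))
  then have tt: "t = t'" and rr: "X = Y" by auto
  show ?case
  proof (cases "ts = []")
    case True
    show ?thesis
    proof (cases "ts'' = []")
      case True then show ?thesis using rr tt ts' \<open>ts = []\<close> unfolding X_def Y_def by simp
    next
      case False then show ?thesis using rr \<open>ts = []\<close> Cons.prems(7) unfolding X_def Y_def by force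
    qed
  next
    case False
    show ?thesis
    proof (cases "ts'' = []")
      case True then show ?thesis using rr False Cons.prems(8) unfolding X_def Y_def by force
    next
      case F2: False
      have e2: "commasep (map yield_tree ts) @ r = commasep (map yield_tree ts'') @ r'"
        using rr False F2 unfolding X_def Y_def by simp
      have i1: "\<forall>t\<in>set ts. \<forall>t' r r'. valid_tree n t \<longrightarrow> valid_tree n t' \<longrightarrow>
                 yield_tree t @ r = yield_tree t' @ r' \<longrightarrow> t = t' \<and> r = r'"
        using Cons.prems(1) by (meson list.set_intros(2))
      have i2: "\<forall>t\<in>set ts. valid_tree n t" using Cons.prems(2) by simp
      have i3: "\<forall>t\<in>set ts''. valid_tree n t" using Cons.prems(3) ts' by simp
      have "ts = ts'' \<and> r = r'"
        using Cons.IH[OF i1 i2 i3 False F2 e2 Cons.prems(7,8)] .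
      then show ?thesis using tt ts' by simp
    qed
  qed
qed

lemma tree_inj:
  "valid_tree n t \<Longrightarrow> valid_tree n t' \<Longrightarrow> yield_tree t @ r = yield_tree t' @ r' \<Longrightarrow> t = t' \<and> r = r'"
proof (induction t arbitrary: t' r r')
  case (Point p)
  then show ?case by (cases t') auto
next
  case (Splat ts p)
  have IH: "\<forall>t\<in>set ts. \<forall>t' r r'. valid_tree n t \<longrightarrow> valid_tree n t' \<longrightarrow>
                 yield_tree t @ r = yield_tree t' @ r' \<longrightarrow> t = t' \<and> r = r'"
    using Splat.IH by blast
  have v1: "\<forall>t\<in>set ts. valid_tree n t" "ts \<noteq> []" using Splat.prems(1) by auto
  show ?case
  proof (cases t')
    case (Point x) then show ?thesis using Splat.prems by simp
  next
    case (Splat ts' p')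
    have v2: "\<forall>t\<in>set ts'. valid_tree n t" "ts' \<noteq> []" using Splat.prems(2) \<open>t' = _\<close> by auto
    have e: "commasep (map yield_tree ts) @ ([Bar, PtSym p, RBrack] @ r) = commasep (map yield_tree ts') @ ([Bar, PtSym p', RBrack] @ r')"
      using Splat.prems(3) \<open>t' = _\<close> by simp
    have "ts = ts' \<and> [Bar, PtSym p, RBrack] @ r = [Bar, PtSym p', RBrack] @ r'"
      by (rule commasep_inj[OF IH v1(1) v2(1) v1(2) v2(2) e]) auto
    then show ?thesis using \<open>t' = _\<close> by simp
  next
    case (Belt ts')
    have v2: "\<forall>t\<in>set ts'. valid_tree n t" "ts' \<noteq> []" using Splat.prems(2) \<open>t' = _\<close> by auto
    have e: "commasep (map yield_tree ts) @ ([Bar, PtSym p, RBrack] @ r) = commasep (map yield_tree ts') @ ([RBrack] @ r')"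
      using Splat.prems(3) \<open>t' = _\<close> by simp
    have "ts = ts' \<and> [Bar, PtSym p, RBrack] @ r = [RBrack] @ r'"
      by (rule commasep_inj[OF IH v1(1) v2(1) v1(2) v2(2) e]) auto
    then show ?thesis by simp
  qed
next
  case (Belt ts)
  have IH: "\<forall>t\<in>set ts. \<forall>t' r r'. valid_tree n t \<longrightarrow> valid_tree n t' \<longrightarrow>
                 yield_tree t @ r = yield_tree t' @ r' \<longrightarrow> t = t' \<and> r = r'"
    using Belt.IH by blast
  have v1: "\<forall>t\<in>set ts. valid_tree n t" "ts \<noteq> []" using Belt.prems(1) by auto
  show ?case
  proof (cases t')
    case (Point x) then show ?thesis using Belt.prems by simp
  next
    case (Splat ts' p')
    have v2: "\<forall>t\<in>set ts'. valid_tree n t" "ts' \<noteq> []" using Belt.prems(2) \<open>t' = _\<close> by auto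
    have e: "commasep (map yield_tree ts) @ ([RBrack] @ r) = commasep (map yield_tree ts') @ ([Bar, PtSym p', RBrack] @ r')"
      using Belt.prems(3) \<open>t' = _\<close> by simp
    have "ts = ts' \<and> [RBrack] @ r = [Bar, PtSym p', RBrack] @ r'"
      by (rule commasep_inj[OF IH v1(1) v2(1) v1(2) v2(2) e]) auto
    then show ?thesis by simp
  next
    case (Belt ts')
    have v2: "\<forall>t\<in>set ts'. valid_tree n t" "ts' \<noteq> []" using Belt.prems(2) \<open>t' = _\<close> by auto
    have e: "commasep (map yield_tree ts) @ ([RBrack] @ r) = commasep (map yield_tree ts') @ ([RBrack] @ r')"
      using Belt.prems(3) \<open>t' = _\<close> by simp
    have "ts = ts' \<and> [RBrack] @ r = [RBrack] @ r'"
      by (rule commasep_inj[OF IH v1(1) v2(1) v1(2) v2(2) e]) auto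
    then show ?thesis using \<open>t' = _\<close> by simp
  qed
qed

lemma comp_inj:
  assumes "valid_comp n c" "valid_comp n c'" "yield_comp c @ r = yield_comp c' @ r'"
  shows "c = c' \<and> r = r'"
proof (cases c)
  case (Cycle ts)
  show ?thesis
  proof (cases c')
    case (Cycle ts')
    have IH: "\<forall>t\<in>set ts. \<forall>t' r r'. valid_tree n t \<longrightarrow> valid_tree n t' \<longrightarrow>
                 yield_tree t @ r = yield_tree t' @ r' \<longrightarrow> t = t' \<and> r = r'"
      using tree_inj by blast
    have v1: "\<forall>t\<in>set ts. valid_tree n t" "ts \<noteq> []" using assms(1) \<open>c = _\<close> by auto
    have v2: "\<forall>t\<in>set ts'. valid_tree n t" "ts' \<noteq> []" using assms(2) \<open>c' = _\<close> by auto
    have e: "commasep (map yield_tree ts) @ ([RPar] @ r) = commasep (map yield_tree ts') @ ([RPar] @ r')"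
      using assms(3) \<open>c = _\<close> \<open>c' = _\<close> by simp
    have "ts = ts' \<and> [RPar] @ r = [RPar] @ r'"
      by (rule commasep_inj[OF IH v1(1) v2(1) v1(2) v2(2) e]) auto
    then show ?thesis using \<open>c = _\<close> \<open>c' = _\<close> by simp
  next
    case (NTree t')
    then show ?thesis using assms \<open>c = _\<close> by (cases t') auto
  qed
next
  case (NTree t)
  show ?thesis
  proof (cases c')
    case (Cycle ts')
    then show ?thesis using assms \<open>c = _\<close> by (cases t) auto
  next
    case (NTree t')
    have "valid_tree n t" "valid_tree n t'" "yield_tree t @ r = yield_tree t' @ r'"
      using assms \<open>c = _\<close> \<open>c' = _\<close> by auto
    then show ?thesis using tree_inj[of n t t' r r'] \<open>c = _\<close> \<open>c' = _\<close> by simp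
  qed
qed

lemma yield_comp_ne: "yield_comp c \<noteq> []"
  by (cases c) (auto simp: yield_tree_ne)

lemma comps_inj:
  "\<forall>c\<in>set cs. valid_comp n c \<Longrightarrow> \<forall>c\<in>set cs'. valid_comp n c \<Longrightarrow>
   concat (map yield_comp cs) = concat (map yield_comp cs') \<Longrightarrow> cs = cs'"
proof (induction cs arbitrary: cs')
  case Nil then show ?case by (cases cs') (auto simp: yield_comp_ne)
next
  case (Cons c cs)
  show ?case
  proof (cases cs')
    case Nil then show ?thesis using Cons.prems(3) by (auto simp: yield_comp_ne)
  next
    case (Cons c' cs'')
    have "valid_comp n c" "valid_comp n c'" using Cons.prems(1,2) \<open>cs' = _\<close> by auto
    moreover have "yield_comp c @ concat (map yield_comp cs) = yield_comp c' @ concat (map yield_comp cs'')"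
      using Cons.prems(3) \<open>cs' = _\<close> by simp
    ultimately have "c = c'" "concat (map yield_comp cs) = concat (map yield_comp cs'')"
      using comp_inj by blast+
    moreover have "cs = cs''" using Cons.IH[of cs''] Cons.prems(1,2) \<open>cs' = _\<close> calculation(2) by simp
    ultimately show ?thesis using \<open>cs' = _\<close> by simp
  qed
qed

lemma commasep_ne2: "2 \<le> length ts \<Longrightarrow> Comma \<in> set (commasep (map yield_tree ts))"
proof -
  assume "2 \<le> length ts"
  then obtain a b rest where "ts = a # b # rest" by (cases ts; cases "tl ts") auto
  then show ?thesis by simp
qed

lemma comps_not_id: "valid_sword n (Comps cs) \<Longrightarrow> yield_sword (Comps cs) \<noteq> [LPar, RPar]"
proof -
  assume v: "valid_sword n (Comps cs)"
  then obtain c cr where cs: "cs = c # cr" by (cases cs) auto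
  have vc: "valid_comp n c" using v cs by auto
  show ?thesis
  proof (cases c)
    case (Cycle ts)
    then have "Comma \<in> set (yield_comp c)" using vc commasep_ne2[of ts] by auto
    then have C: "Comma \<in> set (yield_sword (Comps cs))" using cs by simp
    show ?thesis
    proof
      assume "yield_sword (Comps cs) = [LPar, RPar]"
      then have "Comma \<in> set [LPar, RPar]" using C by metis
      then show False by simp
    qed
  next
    case (NTree t)
    then show ?thesis using cs vc by (cases t) auto
  qed
qed

lemma sword_inj: "valid_sword n s \<Longrightarrow> valid_sword n s' \<Longrightarrow> yield_sword s = yield_sword s' \<Longrightarrow> s = s'"
proof (cases s)
  case IdWord
  assume a: "valid_sword n s" "valid_sword n s'" "yield_sword s = yield_sword s'"
  show ?thesis
  proof (cases s')
    case (Comps cs') then show ?thesis using a IdWord comps_not_id[of n cs'] by simp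
  qed (simp add: IdWord)
next
  case (Comps cs)
  assume a: "valid_sword n s" "valid_sword n s'" "yield_sword s = yield_sword s'"
  show ?thesis
  proof (cases s')
    case IdWord then show ?thesis using a Comps comps_not_id[of n cs] by simp
  next
    case (Comps cs')
    then show ?thesis using a \<open>s = Comps cs\<close> comps_inj[of cs n cs'] by simp
  qed
qed


fun pts :: "tree \<Rightarrow> nat list" where
  "pts (Point p) = [p]"
| "pts (Splat ts p) = concat (map pts ts) @ [p]"
| "pts (Belt ts) = concat (map pts ts)"

fun ptsC :: "comp \<Rightarrow> nat list" where
  "ptsC (Cycle ts) = concat (map pts ts)"
| "ptsC (NTree t) = pts t"

lemma pow_nil[simp]: "points_of_word [] = []"
  by (simp add: points_of_word_def)

lemma pow_cons[simp]: "points_of_word (x # w) = (case x of PtSym p \<Rightarrow> p # points_of_word w | _ \<Rightarrow> points_of_word w)"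
  by (cases x) (simp_all add: points_of_word_def)

lemma pow_append[simp]: "points_of_word (a @ b) = points_of_word a @ points_of_word b"
  by (simp add: points_of_word_def)

lemma pow_commasep: "points_of_word (commasep ws) = concat (map points_of_word ws)"
  by (induction ws rule: commasep.induct) simp_all

lemma pow_concat: "points_of_word (concat ws) = concat (map points_of_word ws)"
  by (induction ws) simp_all

lemma pts_yield: "points_of_word (yield_tree t) = pts t"
  by (induction t) (simp_all add: pow_commasep cong: map_cong)

lemma ptsC_yield: "points_of_word (yield_comp c) = ptsC c"
  by (cases c) (simp_all add: pow_commasep pts_yield cong: map_cong)

lemma distinct_concat_map:
  "distinct xs \<Longrightarrow> (\<forall>x\<in>set xs. distinct (h x)) \<Longrightarrow>
   (\<forall>x\<in>set xs. \<forall>y\<in>set xs. x \<noteq> y \<longrightarrow> set (h x) \<inter> set (h y) = {}) \<Longrightarrow> distinct (concat (map h xs))"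
  by (induction xs) auto

lemma interp_belt2: "interp_tree (Belt [x, y]) = interp_tree x \<union> interp_tree y \<union> {(root x, root y)}"
proof -
  have "{(root ([x, y] ! i), root ([x, y] ! (i+1))) | i. i + 1 < length [x, y]} = {(root x, root y)}"
    by auto
  then show ?thesis by simp
qed

locale fn =
  fixes n :: nat and f :: "nat \<Rightarrow> nat"
  assumes fr: "\<forall>p\<in>{1..n}. f p \<in> {1..n}"
begin

definition cyc :: "nat \<Rightarrow> bool" where
  "cyc x \<longleftrightarrow> x \<in> {1..n} \<and> (\<exists>k>0. (f^^k) x = x)"

definition D :: "nat \<Rightarrow> nat set" where
  "D q = {x \<in> {1..n}. \<exists>k. (f^^k) x = q \<and> (\<forall>j<k. \<not> cyc ((f^^j) x))}"

definition Pre :: "nat \<Rightarrow> nat set" where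
  "Pre q = {a \<in> {1..n}. \<not> cyc a \<and> f a = q}"

lemma f_range: "x \<in> {1..n} \<Longrightarrow> f x \<in> {1..n}"
  using fr by blast

lemma pow_range: "x \<in> {1..n} \<Longrightarrow> (f^^k) x \<in> {1..n}"
proof (induction k)
  case (Suc k) then show ?case using f_range[OF Suc.IH[OF Suc.prems]] by simp
qed simp

lemma cyc_f: "cyc x \<Longrightarrow> cyc (f x)"
proof -
  assume "cyc x"
  then obtain k where k: "k > 0" "(f^^k) x = x" and x: "x \<in> {1..n}" unfolding cyc_def by blast
  have "(f^^k) (f x) = f ((f^^k) x)" by (simp add: funpow_swap1)
  then show ?thesis using k x f_range unfolding cyc_def by auto
qed

lemma cyc_pow: "cyc x \<Longrightarrow> cyc ((f^^j) x)"
  by (induction j) (auto simp: cyc_f)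

lemma D_sub: "D q \<subseteq> {1..n}"
  unfolding D_def by auto

lemma finite_D: "finite (D q)"
  using D_sub finite_subset by blast

lemma D_self: "q \<in> {1..n} \<Longrightarrow> q \<in> D q"
  unfolding D_def by (auto intro!: exI[of _ 0])

lemma Pre_sub: "Pre q \<subseteq> {1..n}"
  unfolding Pre_def by auto

lemma D_decomp: assumes q: "q \<in> {1..n}" shows "D q = insert q (\<Union>a\<in>Pre q. D a)"
proof
  show "D q \<subseteq> insert q (\<Union>a\<in>Pre q. D a)"
  proof
    fix x assume "x \<in> D q"
    then obtain k where x: "x \<in> {1..n}" and k: "(f^^k) x = q" "\<forall>j<k. \<not> cyc ((f^^j) x)"
      unfolding D_def by blast
    show "x \<in> insert q (\<Union>a\<in>Pre q. D a)"
    proof (cases k)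
      case 0 then show ?thesis using k by simp
    next
      case (Suc m)
      let ?a = "(f^^m) x"
      have "f ?a = q" using k Suc by simp
      moreover have "\<not> cyc ?a" using k Suc by simp
      moreover have "?a \<in> {1..n}" using pow_range x by blast
      ultimately have "?a \<in> Pre q" unfolding Pre_def by blast
      moreover have "x \<in> D ?a" unfolding D_def using x k Suc by auto
      ultimately show ?thesis by blast
    qed
  qed
next
  show "insert q (\<Union>a\<in>Pre q. D a) \<subseteq> D q"
  proof
    fix x assume "x \<in> insert q (\<Union>a\<in>Pre q. D a)"
    then consider "x = q" | a where "a \<in> Pre q" "x \<in> D a" by blast
    then show "x \<in> D q"
    proof cases
      case 1 then show ?thesis using D_self q by simp
    next
      case 2
      then obtain m where x: "x \<in> {1..n}" and m: "(f^^m) x = a" "\<forall>j<m. \<not> cyc ((f^^j) x)"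
        unfolding D_def by blast
      have "(f^^Suc m) x = q" using m 2 unfolding Pre_def by simp
      moreover have "\<forall>j<Suc m. \<not> cyc ((f^^j) x)"
        using m 2 unfolding Pre_def by (auto simp: less_Suc_eq)
      ultimately show ?thesis unfolding D_def using x by blast
    qed
  qed
qed

lemma q_notin: assumes a: "a \<in> Pre q" shows "q \<notin> D a"
proof
  assume "q \<in> D a"
  then obtain m where q: "q \<in> {1..n}" and m: "(f^^m) q = a" "\<forall>j<m. \<not> cyc ((f^^j) q)"
    unfolding D_def by blast
  have fa: "f a = q" "\<not> cyc a" using a unfolding Pre_def by auto
  have "(f^^Suc m) q = q" using m fa by simp
  then have cq: "cyc q" using q unfolding cyc_def by blast
  show False
  proof (cases m)
    case 0 then show ?thesis using m fa cq by simp
  next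
    case (Suc m') then show ?thesis using m(2) cq by auto
  qed
qed

lemma disj_aux:
  assumes "i < j" "(f^^i) x = a" "(f^^j) x = b" "f a = q" "f b = q" "q \<in> {1..n}" "\<not> cyc b"
  shows False
proof -
  obtain d where j: "j = Suc d + i" using assms(1) less_iff_Suc_add by auto
  have "(f^^j) x = (f^^d) (f ((f^^i) x))" unfolding j funpow_add funpow_Suc_right by simp
  then have b: "b = (f^^d) q" using assms by simp
  have "(f^^Suc d) q = q" using b assms by simp
  then have "cyc q" using assms(6) unfolding cyc_def by blast
  then have "cyc b" using b cyc_pow by simp
  then show False using assms by simp
qed

lemma Pre_disj: assumes "a \<in> Pre q" "b \<in> Pre q" "a \<noteq> b" shows "D a \<inter> D b = {}"
proof (rule ccontr)
  assume "D a \<inter> D b \<noteq> {}"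
  then obtain x i j where i: "(f^^i) x = a" and j: "(f^^j) x = b"
    unfolding D_def by blast
  have pa: "f a = q" "\<not> cyc a" "a \<in> {1..n}" and pb: "f b = q" "\<not> cyc b" using assms unfolding Pre_def by auto
  have q: "q \<in> {1..n}" using pa f_range by auto
  consider "i < j" | "i = j" | "j < i" by linarith
  then show False
  proof cases
    case 1 show ?thesis by (rule disj_aux[OF 1 i j pa(1) pb(1) q pb(2)])
  next
    case 2 then show ?thesis using i j assms by simp
  next
    case 3 show ?thesis by (rule disj_aux[OF 3 j i pb(1) pa(1) q pa(2)])
  qed
qed

lemma D_psub: assumes "a \<in> Pre q" shows "D a \<subset> D q"
proof -
  have q: "q \<in> {1..n}" using assms f_range unfolding Pre_def by auto
  show ?thesis using D_decomp[OF q] assms q_notin[OF assms] D_self[OF q] by blast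
qed

definition good :: "tree \<Rightarrow> nat \<Rightarrow> bool" where
  "good t q \<longleftrightarrow> valid_tree n t \<and> root t = q \<and> set (pts t) = D q \<and> distinct (pts t) \<and>
     interp_tree t \<subseteq> graph_on n f \<and> Domain (interp_tree t) = D q - {q}"

end

context fn begin

lemma tree_exists: "q \<in> {1..n} \<Longrightarrow> \<exists>t. good t q"
proof (induction "card (D q)" arbitrary: q rule: less_induct)
  case less
  have "\<forall>a\<in>Pre q. \<exists>t. good t a"
  proof
    fix a assume a: "a \<in> Pre q"
    have "card (D a) < card (D q)" using D_psub[OF a] finite_D psubset_card_mono by blast
    moreover have "a \<in> {1..n}" using a Pre_sub by blast
    ultimately show "\<exists>t. good t a" using less.hyps by blast
  qed
  then obtain g where g: "\<forall>a\<in>Pre q. good (g a) a" by (metis bchoice)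
  have finP: "finite (Pre q)" using Pre_sub finite_subset by blast
  define as where "as = sorted_list_of_set (Pre q)"
  have setas: "set as = Pre q" and dist: "distinct as" using finP unfolding as_def by auto
  have Dq: "D q = insert q (\<Union>a\<in>Pre q. D a)" using D_decomp[OF less.prems] .
  have qn: "q \<notin> (\<Union>a\<in>Pre q. D a)" using q_notin by blast
  have gv: "\<And>a. a \<in> Pre q \<Longrightarrow> valid_tree n (g a) \<and> root (g a) = a \<and> set (pts (g a)) = D a \<and>
     distinct (pts (g a)) \<and> interp_tree (g a) \<subseteq> graph_on n f \<and> Domain (interp_tree (g a)) = D a - {a}"
    using g unfolding good_def by blast
  have aDa: "\<And>a. a \<in> Pre q \<Longrightarrow> a \<in> D a" using D_self Pre_sub by blast
  have edges: "\<And>a. a \<in> Pre q \<Longrightarrow> (a, q) \<in> graph_on n f"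
    unfolding graph_on_def Pre_def by auto
  have S: "set (concat (map pts (map g as))) = (\<Union>a\<in>Pre q. D a)"
    using gv setas by auto
  have Dt: "distinct (concat (map pts (map g as)))"
  proof -
    have "distinct (concat (map (pts \<circ> g) as))"
      apply (rule distinct_concat_map[OF dist])
      using gv Pre_disj setas by auto
    then show ?thesis by simp
  qed
  have I: "(\<Union>t\<in>set (map g as). interp_tree t) \<subseteq> graph_on n f" using gv setas by auto
  have Dom: "Domain (\<Union>t\<in>set (map g as). interp_tree t) = (\<Union>a\<in>Pre q. D a - {a})"
  proof -
    have "Domain (\<Union>t\<in>set (map g as). interp_tree t) = (\<Union>a\<in>Pre q. Domain (interp_tree (g a)))"
      using setas by auto
    also have "\<dots> = (\<Union>a\<in>Pre q. D a - {a})"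
      using gv by (intro SUP_cong) auto
    finally show ?thesis .
  qed
  show ?case
  proof (cases as)
    case Nil
    then have "Pre q = {}" using setas by simp
    then have "D q = {q}" using Dq by simp
    then have "good (Point q) q" unfolding good_def using less.prems by simp
    then show ?thesis by blast
  next
    case (Cons a rest)
    show ?thesis
    proof (cases rest)
      case Nil
      have P: "Pre q = {a}" using setas Cons Nil by simp
      let ?t = "Belt [g a, Point q]"
      have ga: "valid_tree n (g a) \<and> root (g a) = a \<and> set (pts (g a)) = D a \<and>
         distinct (pts (g a)) \<and> interp_tree (g a) \<subseteq> graph_on n f \<and> Domain (interp_tree (g a)) = D a - {a}"
        using gv P by blast
      have it: "interp_tree ?t = interp_tree (g a) \<union> {(a, q)}" using ga by (simp add: interp_belt2)
      have Dq1: "D q = insert q (D a)" using Dq P by simp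
      have qa: "q \<notin> D a" using qn P by simp
      have aa: "a \<in> D a" using aDa P by simp
      have e1: "valid_tree n ?t" using ga less.prems by simp
      have e2: "root ?t = q" by simp
      have e3: "set (pts ?t) = D q" using ga Dq1 by simp
      have e4: "distinct (pts ?t)" using ga qa by simp
      have e5: "interp_tree ?t \<subseteq> graph_on n f" unfolding it using ga edges[of a] P by blast
      have e6: "Domain (interp_tree ?t) = D q - {q}" unfolding it Dq1 using ga qa aa by auto
      have "good ?t q" unfolding good_def using e1 e2 e3 e4 e5 e6 by blast
      then show ?thesis by blast
    next
      case (Cons b rest')
      let ?t = "Splat (map g as) q"
      have len: "2 \<le> length as" using \<open>as = a # rest\<close> Cons by simp
      have roots: "{(root t, q) | t. t \<in> set (map g as)} = (\<lambda>a. (a, q)) ` Pre q"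
      proof -
        have "{(root t, q) | t. t \<in> set (map g as)} = (\<lambda>a. (root (g a), q)) ` Pre q"
          using setas by auto
        also have "\<dots> = (\<lambda>a. (a, q)) ` Pre q"
          using gv by (intro image_cong) auto
        finally show ?thesis .
      qed
      have it: "interp_tree ?t = (\<Union>t\<in>set (map g as). interp_tree t) \<union> (\<lambda>a. (a, q)) ` Pre q"
        using roots by simp
      have v: "valid_tree n ?t" using len gv setas less.prems by auto
      have p: "pts ?t = concat (map pts (map g as)) @ [q]" by simp
      have dimg: "Domain ((\<lambda>a. (a, q)) ` Pre q) = Pre q" by force
      have d1: "Domain (interp_tree ?t) = (\<Union>a\<in>Pre q. D a)"
        unfolding it Domain_Un_eq Dom dimg using aDa by blast
      have d2: "interp_tree ?t \<subseteq> graph_on n f" unfolding it using I edges by blast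
      have d3: "set (pts ?t) = D q" unfolding p using S Dq by simp
      have d4: "distinct (pts ?t)" unfolding p using Dt S qn by simp
      have d5: "D q - {q} = (\<Union>a\<in>Pre q. D a)" using Dq qn by blast
      have "good ?t q" unfolding good_def
        using v d1 d2 d3 d4 d5 by simp
      then show ?thesis by blast
    qed
  qed
qed

end

context fn begin

definition per :: "nat \<Rightarrow> nat" where
  "per c = (LEAST k. 0 < k \<and> (f^^k) c = c)"

lemma per_prop: assumes "cyc c" shows "0 < per c" "(f^^per c) c = c"
proof -
  have "\<exists>k. 0 < k \<and> (f^^k) c = c" using assms unfolding cyc_def by blast
  then have "0 < per c \<and> (f^^per c) c = c" unfolding per_def by (rule LeastI_ex)
  then show "0 < per c" "(f^^per c) c = c" by auto
qed

lemma per_min: assumes "0 < k" "k < per c" shows "(f^^k) c \<noteq> c"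
  using not_less_Least[of k "\<lambda>k. 0 < k \<and> (f^^k) c = c"] assms unfolding per_def by blast

lemma funpow_mult_per: assumes "cyc c" shows "(f^^(m * per c)) c = c"
proof (induction m)
  case (Suc m)
  have "(f^^(Suc m * per c)) c = (f^^per c) ((f^^(m * per c)) c)"
    by (simp add: funpow_add)
  then show ?case using Suc per_prop[OF assms] by simp
qed simp

lemma funpow_mod_per: assumes "cyc c" shows "(f^^m) c = (f^^(m mod per c)) c"
proof -
  have "m = m mod per c + (m div per c) * per c" by (rule mod_div_mult_eq[symmetric])
  then have "(f^^m) c = (f^^(m mod per c)) ((f^^((m div per c) * per c)) c)"
    by (metis funpow_add o_apply)
  then show ?thesis using funpow_mult_per[OF assms] by simp
qed

definition orb :: "nat \<Rightarrow> nat list" where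
  "orb c = map (\<lambda>j. (f^^j) c) [0..<per c]"

lemma orb_distinct: assumes "cyc c" shows "distinct (orb c)"
proof -
  have "inj_on (\<lambda>j. (f^^j) c) {0..<per c}"
  proof (rule inj_onI, rule ccontr)
    fix i j assume i: "i \<in> {0..<per c}" and j: "j \<in> {0..<per c}" and e: "(f^^i) c = (f^^j) c" and ne: "i \<noteq> j"
    have key: "\<And>i j. i < j \<Longrightarrow> j < per c \<Longrightarrow> (f^^i) c = (f^^j) c \<Longrightarrow> False"
    proof -
      fix i j assume ij: "i < j" "j < per c" "(f^^i) c = (f^^j) c"
      have "(f^^(per c - j + i)) c = (f^^(per c - j)) ((f^^i) c)" by (simp add: funpow_add)
      also have "\<dots> = (f^^(per c - j)) ((f^^j) c)" using ij by simp
      also have "\<dots> = (f^^(per c - j + j)) c" by (simp add: funpow_add)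
      also have "\<dots> = c" using ij per_prop[OF assms] by simp
      finally have "(f^^(per c - j + i)) c = c" .
      moreover have "per c - j + i < per c" "0 < per c - j + i" using ij by linarith+
      ultimately show False by (metis per_min)
    qed
    show False
    proof (cases "i < j")
      case True then show ?thesis using key j e by simp
    next
      case False then have "j < i" using ne by simp
      then show ?thesis using key[of j i] i e by simp
    qed
  qed
  then show ?thesis unfolding orb_def by (simp add: distinct_map)
qed

lemma orb_set: assumes "cyc c" shows "set (orb c) = range (\<lambda>j. (f^^j) c)"
proof
  show "set (orb c) \<subseteq> range (\<lambda>j. (f^^j) c)" unfolding orb_def by auto
  show "range (\<lambda>j. (f^^j) c) \<subseteq> set (orb c)"
  proof
    fix x assume "x \<in> range (\<lambda>j. (f^^j) c)"
    then obtain m where x: "x = (f^^m) c" by blast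
    have "m mod per c < per c" using per_prop[OF assms] by simp
    then show "x \<in> set (orb c)" unfolding orb_def x funpow_mod_per[OF assms, of m] by auto
  qed
qed

lemma orb_cyc: assumes "cyc c" "y \<in> set (orb c)" shows "cyc y"
  using assms cyc_pow unfolding orb_def by auto

lemma D_cyc_disj: assumes "cyc y" "cyc z" "y \<noteq> z" shows "D y \<inter> D z = {}"
proof (rule ccontr)
  assume "D y \<inter> D z \<noteq> {}"
  then obtain x i k where i: "(f^^i) x = y" "\<forall>j<i. \<not> cyc ((f^^j) x)"
    and k: "(f^^k) x = z" "\<forall>j<k. \<not> cyc ((f^^j) x)"
    unfolding D_def by blast
  consider "i < k" | "i = k" | "k < i" by linarith
  then show False
  proof cases
    case 1 then show ?thesis using i k assms by auto
  next
    case 2 then show ?thesis using i k assms by auto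
  next
    case 3 then show ?thesis using i k assms by auto
  qed
qed

lemma coverage: assumes x: "x \<in> {1..n}" shows "\<exists>c. cyc c \<and> x \<in> D c"
proof -
  have "\<not> inj_on (\<lambda>j. (f^^j) x) {0..n}"
  proof
    assume inj: "inj_on (\<lambda>j. (f^^j) x) {0..n}"
    have "(\<lambda>j. (f^^j) x) ` {0..n} \<subseteq> {1..n}" using pow_range x by blast
    then have "card ((\<lambda>j. (f^^j) x) ` {0..n}) \<le> card {1..n}" by (rule card_mono[rotated]) simp
    then show False using card_image[OF inj] by simp
  qed
  then obtain i j where ij: "i \<in> {0..n}" "j \<in> {0..n}" "i \<noteq> j" "(f^^i) x = (f^^j) x"
    unfolding inj_on_def by blast
  have ex: "\<exists>k. cyc ((f^^k) x)"
  proof -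
    have aux: "\<And>i j. i < j \<Longrightarrow> (f^^i) x = (f^^j) x \<Longrightarrow> cyc ((f^^i) x)"
    proof -
      fix i j :: nat assume a: "i < j" "(f^^i) x = (f^^j) x"
      have "(f^^(j - i)) ((f^^i) x) = (f^^(j - i + i)) x" by (simp add: funpow_add)
      also have "\<dots> = (f^^j) x" using a by simp
      finally have "(f^^(j - i)) ((f^^i) x) = (f^^i) x" using a by simp
      then show "cyc ((f^^i) x)" using a pow_range[OF x] unfolding cyc_def
        by (metis zero_less_diff)
    qed
    show ?thesis
    proof (cases "i < j")
      case True then show ?thesis using aux ij by blast
    next
      case False then have "j < i" using ij by simp
      then show ?thesis using aux ij by metis
    qed
  qed
  define k where "k = (LEAST k. cyc ((f^^k) x))"
  have ck: "cyc ((f^^k) x)" unfolding k_def using ex by (rule LeastI_ex)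
  have "\<forall>j<k. \<not> cyc ((f^^j) x)" unfolding k_def using not_less_Least by blast
  then have "x \<in> D ((f^^k) x)" unfolding D_def using x by blast
  then show ?thesis using ck by blast
qed

end

context fn begin

definition Tr :: "nat \<Rightarrow> tree" where "Tr q = (SOME t. good t q)"

lemma good_Tr: "q \<in> {1..n} \<Longrightarrow> good (Tr q) q"
  unfolding Tr_def using tree_exists by (rule someI_ex)

lemma cyc_range: "cyc c \<Longrightarrow> c \<in> {1..n}" unfolding cyc_def by blast

lemma Tr_props: assumes "q \<in> {1..n}"
  shows "valid_tree n (Tr q)" "root (Tr q) = q" "set (pts (Tr q)) = D q" "distinct (pts (Tr q))"
    "interp_tree (Tr q) \<subseteq> graph_on n f" "Domain (interp_tree (Tr q)) = D q - {q}"
  using good_Tr[OF assms] unfolding good_def by auto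

lemma comp_cycle:
  assumes c: "cyc c" and p2: "2 \<le> per c"
  defines "cc \<equiv> Cycle (map Tr (orb c))"
  shows "valid_comp n cc \<and> distinct (ptsC cc) \<and> set (ptsC cc) = (\<Union>y\<in>set (orb c). D y) \<and>
         interp_comp cc \<subseteq> graph_on n f \<and> (\<Union>y\<in>set (orb c). D y) \<subseteq> Domain (interp_comp cc)"
proof -
  let ?p = "per c"
  let ?ts = "map Tr (orb c)"
  have inr: "\<And>y. y \<in> set (orb c) \<Longrightarrow> y \<in> {1..n}" using orb_cyc[OF c] cyc_range by blast
  have len: "length ?ts = ?p" unfolding orb_def by simp
  have nth: "\<And>i. i < ?p \<Longrightarrow> root (?ts ! i) = (f^^i) c"
  proof -
    fix i assume i: "i < ?p"
    have "?ts ! i = Tr ((f^^i) c)" using i unfolding orb_def by simp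
    then show "root (?ts ! i) = (f^^i) c" using Tr_props(2)[OF pow_range[OF cyc_range[OF c]]] by simp
  qed
  have G: "\<And>y. y \<in> {1..n} \<Longrightarrow> (y, f y) \<in> graph_on n f" unfolding graph_on_def by blast
  have v: "valid_comp n cc" unfolding cc_def using len p2 inr Tr_props(1) by auto
  have d: "distinct (ptsC cc)"
  proof -
    have "distinct (concat (map (pts \<circ> Tr) (orb c)))"
      apply (rule distinct_concat_map[OF orb_distinct[OF c]])
      using inr Tr_props(3,4) D_cyc_disj orb_cyc[OF c] by auto
    then show ?thesis unfolding cc_def by simp
  qed
  have s: "set (ptsC cc) = (\<Union>y\<in>set (orb c). D y)"
    unfolding cc_def using inr Tr_props(3) by simp
  have A: "(\<Union>t\<in>set ?ts. interp_tree t) \<subseteq> graph_on n f" using inr Tr_props(5) by auto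
  have B: "{(root (?ts ! i), root (?ts ! (i+1))) | i. i + 1 < length ?ts} \<subseteq> graph_on n f"
  proof
    fix e assume "e \<in> {(root (?ts ! i), root (?ts ! (i+1))) | i. i + 1 < length ?ts}"
    then obtain i where i: "i + 1 < ?p" "e = (root (?ts ! i), root (?ts ! (i+1)))" using len by auto
    then have "e = ((f^^i) c, f ((f^^i) c))" using nth by simp
    then show "e \<in> graph_on n f" using G pow_range[OF cyc_range[OF c]] by simp
  qed
  have ne: "?ts \<noteq> []" using len p2 by auto
  have eql: "last ?ts = ?ts ! (?p - 1)" using ne len by (metis last_conv_nth)
  have lastr: "root (last ?ts) = (f^^(?p - 1)) c" unfolding eql by (rule nth) (use p2 in simp)
  have eqh: "hd ?ts = ?ts ! 0" using ne by (metis hd_conv_nth)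
  have hdr: "root (hd ?ts) = c" unfolding eqh using nth[of 0] p2 by simp
  have fl: "f ((f^^(?p - 1)) c) = c"
  proof -
    have "f ((f^^(?p - 1)) c) = (f^^(Suc (?p - 1))) c" by simp
    also have "Suc (?p - 1) = ?p" using p2 by simp
    finally show ?thesis using per_prop(2)[OF c] by simp
  qed
  have C: "(root (last ?ts), root (hd ?ts)) \<in> graph_on n f"
    using lastr hdr fl G[of "(f^^(?p - 1)) c"] pow_range[OF cyc_range[OF c]] by simp
  have I: "interp_comp cc = (\<Union>t\<in>set ?ts. interp_tree t) \<union> {(root (?ts ! i), root (?ts ! (i+1))) | i. i + 1 < length ?ts}
     \<union> {(root (last ?ts), root (hd ?ts))}" unfolding cc_def by simp
  have i1: "interp_comp cc \<subseteq> graph_on n f" unfolding I using A B C by blast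
  have dom1: "set (orb c) \<subseteq> Domain (interp_comp cc)"
  proof
    fix y assume "y \<in> set (orb c)"
    then obtain i where i: "i < ?p" "y = (f^^i) c" unfolding orb_def by auto
    show "y \<in> Domain (interp_comp cc)"
    proof (cases "i + 1 < ?p")
      case True
      have m: "(root (?ts ! i), root (?ts ! (i+1))) \<in> {(root (?ts ! i), root (?ts ! (i+1))) | i. i + 1 < length ?ts}"
        apply (rule CollectI) apply (rule exI[of _ i]) using True len by simp
      have "(y, root (?ts ! (i+1))) \<in> interp_comp cc" unfolding I using m nth[OF i(1)] i(2) by (simp only: UnI1 UnI2)
      then show ?thesis by (rule DomainI)
    next
      case False
      then have "i = ?p - 1" using i by simp
      then have "(y, c) \<in> interp_comp cc" unfolding I using lastr hdr i by simp
      then show ?thesis by blast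
    qed
  qed
  have dom2: "(\<Union>y\<in>set (orb c). D y) \<subseteq> Domain (interp_comp cc)"
  proof
    fix x assume "x \<in> (\<Union>y\<in>set (orb c). D y)"
    then obtain y where y: "y \<in> set (orb c)" "x \<in> D y" by blast
    show "x \<in> Domain (interp_comp cc)"
    proof (cases "x = y")
      case True then show ?thesis using dom1 y by blast
    next
      case False
      then have "x \<in> Domain (interp_tree (Tr y))" using Tr_props(6)[OF inr[OF y(1)]] y by blast
      moreover have "Tr y \<in> set ?ts" using y by simp
      ultimately show ?thesis unfolding I by blast
    qed
  qed
  show ?thesis using v d s i1 dom2 by blast
qed

end

context fn begin

lemma comp_one:
  assumes c: "cyc c"
  shows "\<exists>cs0. (\<forall>x\<in>set cs0. valid_comp n x) \<and> distinct (concat (map ptsC cs0)) \<and>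
     set (concat (map ptsC cs0)) \<subseteq> (\<Union>y\<in>set (orb c). D y) \<and>
     (\<Union>x\<in>set cs0. interp_comp x) \<subseteq> graph_on n f \<and>
     {x \<in> (\<Union>y\<in>set (orb c). D y). f x \<noteq> x} \<subseteq> Domain (\<Union>x\<in>set cs0. interp_comp x)"
proof (cases "2 \<le> per c")
  case True
  show ?thesis
    apply (rule exI[of _ "[Cycle (map Tr (orb c))]"])
    using comp_cycle[OF c True] by auto
next
  case False
  then have p1: "per c = 1" using per_prop(1)[OF c] by simp
  have oc: "orb c = [c]" unfolding orb_def p1 by simp
  have fc: "f c = c" using per_prop(2)[OF c] p1 by simp
  have cn: "c \<in> {1..n}" using cyc_range[OF c] .
  show ?thesis
  proof (cases "D c = {c}")
    case True
    show ?thesis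
      apply (rule exI[of _ "[]"])
      using True fc oc by auto
  next
    case False
    have np: "\<not> is_point (Tr c)"
    proof
      assume "is_point (Tr c)"
      then obtain p where "Tr c = Point p" by (cases "Tr c") auto
      then show False using Tr_props(2,3)[OF cn] False by simp
    qed
    have v: "valid_comp n (NTree (Tr c))" using np Tr_props(1)[OF cn] by simp
    show ?thesis
      apply (rule exI[of _ "[NTree (Tr c)]"])
      using v Tr_props[OF cn] oc fc by auto
  qed
qed

lemma orb_sub: assumes "c \<in> U" "f ` U \<subseteq> U" shows "(f^^j) c \<in> U"
  using assms by (induction j) auto

lemma comps_exist:
  "U \<subseteq> Collect cyc \<Longrightarrow> f ` U \<subseteq> U \<Longrightarrow>
   \<exists>cs. (\<forall>x\<in>set cs. valid_comp n x) \<and> distinct (concat (map ptsC cs)) \<and>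
     set (concat (map ptsC cs)) \<subseteq> (\<Union>y\<in>U. D y) \<and>
     (\<Union>x\<in>set cs. interp_comp x) \<subseteq> graph_on n f \<and>
     {x \<in> (\<Union>y\<in>U. D y). f x \<noteq> x} \<subseteq> Domain (\<Union>x\<in>set cs. interp_comp x)"
proof (induction "card U" arbitrary: U rule: less_induct)
  case less
  show ?case
  proof (cases "U = {}")
    case True
    show ?thesis apply (rule exI[of _ "[]"]) using True by simp
  next
    case False
    then obtain c where cU: "c \<in> U" by blast
    have c: "cyc c" using cU less.prems(1) by blast
    define Ob where "Ob = set (orb c)"
    have Oeq: "Ob = range (\<lambda>j. (f^^j) c)" unfolding Ob_def using orb_set[OF c] .
    have OU: "Ob \<subseteq> U" unfolding Oeq using orb_sub[OF cU less.prems(2)] by blast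
    have cO: "c \<in> Ob" unfolding Oeq by (auto intro: range_eqI[of _ _ 0])
    have finU: "finite U" using less.prems(1) cyc_range finite_subset[of U "{1..n}"] by blast
    define U' where "U' = U - Ob"
    have "U' \<subset> U" unfolding U'_def using cO cU by blast
    then have card: "card U' < card U" using finU by (rule psubset_card_mono[rotated])
    have U'c: "U' \<subseteq> Collect cyc" using less.prems(1) unfolding U'_def by blast
    have U'f: "f ` U' \<subseteq> U'"
    proof
      fix z assume "z \<in> f ` U'"
      then obtain x where x: "x \<in> U'" "z = f x" by blast
      have xc: "cyc x" using x U'c by blast
      then obtain k where k: "k > 0" "(f^^k) x = x" unfolding cyc_def by blast
      have fxU: "f x \<in> U" using x less.prems(2) unfolding U'_def by blast
      have "f x \<notin> Ob"
      proof
        assume "f x \<in> Ob"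
        then obtain j where j: "f x = (f^^j) c" unfolding Oeq by blast
        obtain m where km: "k = Suc m" using k(1) by (cases k) auto
        have "x = (f^^m) (f x)" using k(2) km by (simp add: funpow_Suc_right del: funpow.simps)
        also have "\<dots> = (f^^(m + j)) c" using j by (simp add: funpow_add)
        finally have "x \<in> Ob" unfolding Oeq by blast
        then show False using x unfolding U'_def by blast
      qed
      then show "z \<in> U'" using fxU x unfolding U'_def by blast
    qed
    obtain cs' where cs': "(\<forall>x\<in>set cs'. valid_comp n x)" "distinct (concat (map ptsC cs'))"
      "set (concat (map ptsC cs')) \<subseteq> (\<Union>y\<in>U'. D y)"
      "(\<Union>x\<in>set cs'. interp_comp x) \<subseteq> graph_on n f"
      "{x \<in> (\<Union>y\<in>U'. D y). f x \<noteq> x} \<subseteq> Domain (\<Union>x\<in>set cs'. interp_comp x)"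
      using less.hyps[OF card U'c U'f] by blast
    obtain cs0 where cs0: "(\<forall>x\<in>set cs0. valid_comp n x)" "distinct (concat (map ptsC cs0))"
      "set (concat (map ptsC cs0)) \<subseteq> (\<Union>y\<in>Ob. D y)"
      "(\<Union>x\<in>set cs0. interp_comp x) \<subseteq> graph_on n f"
      "{x \<in> (\<Union>y\<in>Ob. D y). f x \<noteq> x} \<subseteq> Domain (\<Union>x\<in>set cs0. interp_comp x)"
      using comp_one[OF c] unfolding Ob_def by blast
    have disj: "(\<Union>y\<in>Ob. D y) \<inter> (\<Union>y\<in>U'. D y) = {}"
    proof -
      have "\<And>y z. y \<in> Ob \<Longrightarrow> z \<in> U' \<Longrightarrow> D y \<inter> D z = {}"
      proof -
        fix y z assume yz: "y \<in> Ob" "z \<in> U'"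
        have "y \<noteq> z" using yz unfolding U'_def by blast
        moreover have "cyc y" "cyc z" using yz OU less.prems(1) U'c by blast+
        ultimately show "D y \<inter> D z = {}" using D_cyc_disj by blast
      qed
      then show ?thesis by blast
    qed
    have r1: "\<forall>x\<in>set (cs0 @ cs'). valid_comp n x" using cs0(1) cs'(1) by auto
    have sd: "set (concat (map ptsC cs0)) \<inter> set (concat (map ptsC cs')) = {}"
      using cs0(3) cs'(3) disj by blast
    have r2: "distinct (concat (map ptsC (cs0 @ cs')))"
      unfolding map_append concat_append distinct_append using cs0(2) cs'(2) sd by blast
    have sa: "set (concat (map ptsC (cs0 @ cs'))) = set (concat (map ptsC cs0)) \<union> set (concat (map ptsC cs'))"
      by simp
    have s1: "(\<Union>y\<in>Ob. D y) \<subseteq> (\<Union>y\<in>U. D y)" using OU by blast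
    have s2: "(\<Union>y\<in>U'. D y) \<subseteq> (\<Union>y\<in>U. D y)" unfolding U'_def by blast
    have r3: "set (concat (map ptsC (cs0 @ cs'))) \<subseteq> (\<Union>y\<in>U. D y)"
      unfolding sa by (rule Un_least[OF order_trans[OF cs0(3) s1] order_trans[OF cs'(3) s2]])
    have r4: "(\<Union>x\<in>set (cs0 @ cs'). interp_comp x) \<subseteq> graph_on n f" using cs0(4) cs'(4) by auto
    have r5: "{x \<in> (\<Union>y\<in>U. D y). f x \<noteq> x} \<subseteq> Domain (\<Union>x\<in>set (cs0 @ cs'). interp_comp x)"
    proof
      fix x assume "x \<in> {x \<in> (\<Union>y\<in>U. D y). f x \<noteq> x}"
      then obtain y where y: "y \<in> U" "x \<in> D y" "f x \<noteq> x" by blast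
      have eq: "(\<Union>x\<in>set (cs0 @ cs'). interp_comp x) = (\<Union>x\<in>set cs0. interp_comp x) \<union> (\<Union>x\<in>set cs'. interp_comp x)"
        by auto
      show "x \<in> Domain (\<Union>x\<in>set (cs0 @ cs'). interp_comp x)"
      proof (cases "y \<in> Ob")
        case True
        then have "x \<in> Domain (\<Union>x\<in>set cs0. interp_comp x)" using cs0(5) y by blast
        then show ?thesis unfolding eq by blast
      next
        case False
        then have "y \<in> U'" using y unfolding U'_def by blast
        then have "x \<in> Domain (\<Union>x\<in>set cs'. interp_comp x)" using cs'(5) y by blast
        then show ?thesis unfolding eq by blast
      qed
    qed
    show ?thesis using r1 r2 r3 r4 r5 by blast
  qed
qed

end

theorem mainTheorem1:
  fixes n :: nat and f :: "nat \<Rightarrow> nat"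
  assumes "n \<ge> 1"
    and "\<forall>p\<in>{1..n}. f p \<in> {1..n}"
  shows "\<exists>w. well_formed n w \<and>
           (\<forall>s. valid_sword n s \<and> yield_sword s = w \<longrightarrow> interp_sword n s = graph_on n f)"
proof -
  interpret fn n f using assms(2) by unfold_locales
  have cl: "f ` Collect cyc \<subseteq> Collect cyc" using cyc_f by blast
  obtain cs where cs: "(\<forall>x\<in>set cs. valid_comp n x)" "distinct (concat (map ptsC cs))"
      "(\<Union>x\<in>set cs. interp_comp x) \<subseteq> graph_on n f"
      "{x \<in> (\<Union>y\<in>Collect cyc. D y). f x \<noteq> x} \<subseteq> Domain (\<Union>x\<in>set cs. interp_comp x)"
    using comps_exist[OF order.refl cl] by blast
  have UD: "(\<Union>y\<in>Collect cyc. D y) = {1..n}" using D_sub coverage by blast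
  define E where "E = (\<Union>x\<in>set cs. interp_comp x)"
  have fixd: "\<And>x. x \<in> {1..n} \<Longrightarrow> x \<notin> Domain E \<Longrightarrow> f x = x"
  proof (rule ccontr)
    fix x assume x: "x \<in> {1..n}" "x \<notin> Domain E" "f x \<noteq> x"
    then have "x \<in> {x \<in> (\<Union>y\<in>Collect cyc. D y). f x \<noteq> x}" unfolding UD by blast
    then have "x \<in> Domain E" using cs(4) unfolding E_def by (rule rev_subsetD)
    then show False using x by blast
  qed
  have EG: "E \<subseteq> graph_on n f" using cs(3) unfolding E_def .
  show ?thesis
  proof (cases "cs = []")
    case True
    then have fx: "\<And>x. x \<in> {1..n} \<Longrightarrow> f x = x" using fixd unfolding E_def by simp
    have wf: "well_formed n (yield_sword IdWord)"
      unfolding well_formed_def generated_def by (auto intro: exI[of _ IdWord])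
    have gi: "interp_sword n IdWord = graph_on n f"
      unfolding graph_on_def using fx by auto
    have v0: "valid_sword n IdWord" by simp
    show ?thesis
    proof (rule exI[of _ "yield_sword IdWord"], intro conjI allI impI)
      show "well_formed n (yield_sword IdWord)" by (rule wf)
      fix s assume a: "valid_sword n s \<and> yield_sword s = yield_sword IdWord"
      then have "s = IdWord" using sword_inj[OF _ v0] by blast
      then show "interp_sword n s = graph_on n f" using gi by simp
    qed
  next
    case False
    have vs: "valid_sword n (Comps cs)" using False cs(1) by simp
    have pw: "points_of_word (yield_sword (Comps cs)) = concat (map ptsC cs)"
      by (simp add: pow_concat ptsC_yield o_def)
    have wf: "well_formed n (yield_sword (Comps cs))"
      unfolding well_formed_def generated_def using vs pw cs(2) by (intro conjI exI[of _ "Comps cs"]) auto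
    have ie: "interp_sword n (Comps cs) = E \<union> {(p, p) | p. p \<in> {1..n} \<and> p \<notin> Domain E}"
      unfolding E_def by simp
    have gi: "interp_sword n (Comps cs) = graph_on n f"
    proof
      show "interp_sword n (Comps cs) \<subseteq> graph_on n f"
        unfolding ie using EG fixd unfolding graph_on_def by force
      show "graph_on n f \<subseteq> interp_sword n (Comps cs)"
      proof
        fix e assume "e \<in> graph_on n f"
        then obtain p where p: "p \<in> {1..n}" "e = (p, f p)" unfolding graph_on_def by blast
        show "e \<in> interp_sword n (Comps cs)"
        proof (cases "p \<in> Domain E")
          case True
          then obtain z where z: "(p, z) \<in> E" by blast
          then have "(p, z) \<in> graph_on n f" using EG by blast
          then have "z = f p" unfolding graph_on_def by blast
          then show ?thesis unfolding ie using z p by blast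
        next
          case False
          then show ?thesis unfolding ie using fixd[OF p(1) False] p by blast
        qed
      qed
    qed
    have v0: "valid_sword n (Comps cs)" by (rule vs)
    show ?thesis
    proof (rule exI[of _ "yield_sword (Comps cs)"], intro conjI allI impI)
      show "well_formed n (yield_sword (Comps cs))" by (rule wf)
      fix s assume a: "valid_sword n s \<and> yield_sword s = yield_sword (Comps cs)"
      then have "s = (Comps cs)" using sword_inj[OF _ v0] by blast
      then show "interp_sword n s = graph_on n f" using gi by simp
    qed
  qed
qed

end
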